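(* Let $n\ge1$, and for $j=1,\dots,n$ let $\hat\phi_j\in\mathbb{R}$ and $\tilde\phi_j\ge0$. Let $M\ge3$ be an integer, $\vartheta_m=(2m+1)\pi/M$ for $m\in\mathcal{M}=\{0,1,\dots,M-1\}$, and let $\mathbf{h}_m,\mathbf{g}_m\in\mathbb{R}^n$ have $j$th entries $$[\mathbf{h}_m]_j=\max_{|\epsilon|\le2\tilde\phi_j}\cos(2\hat\phi_j-\vartheta_m+\epsilon),\qquad [\mathbf{g}_m]_j=\frac{[\mathbf{h}_m]_j}{\cos(\pi/M)}.$$ For $\mathbf{y}\in\mathbb{R}^n$ with $\mathbf{y}\succeq\mathbf{0}$ define $$S(\mathbf{y})=\max_{\phi_j\in[\hat\phi_j-\tilde\phi_j,\,\hat\phi_j+\tilde\phi_j],\ j=1,\dots,n}\Big\|\sum_{j=1}^n y_j\,\mathbf{u}(2\phi_j)\Big\|.$$ Then for every $\mathbf{y}\succeq\mathbf{0}$, $$0\le\max_{m\in\mathcal{M}}\mathbf{h}_m^{\mathsf T}\mathbf{y}\le S(\mathbf{y})\le\max_{m\in\mathcal{M}}\mathbf{g}_m^{\mathsf T}\mathbf{y}.$$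
   Context: $\mathbf{u}(\phi)=[\cos\phi\ \ \sin\phi]^{\mathsf T}$; $\|\cdot\|$ is the Euclidean norm; $\mathbf{y}\succeq\mathbf{0}$ means entrywise nonnegative. *)

theory Defs
  imports "HOL-Analysis.Analysis"
begin

definition uvec :: "real \<Rightarrow> real ^ 2" where
  "uvec \<phi> = vector [cos \<phi>, sin \<phi>]"

definition theta :: "nat \<Rightarrow> nat \<Rightarrow> real" where
  "theta M m = (2 * real m + 1) * pi / real M"

text \<open>[h_m]_j = max over |eps| <= 2 phit_j of cos(2 phih_j - theta_m + eps)
  (maximum of a continuous function on a compact interval, written as Sup).\<close>
definition hvec :: "(nat \<Rightarrow> real) \<Rightarrow> (nat \<Rightarrow> real) \<Rightarrow> nat \<Rightarrow> nat \<Rightarrow> nat \<Rightarrow> real" where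
  "hvec phih phit M m j =
     Sup ((\<lambda>\<epsilon>. cos (2 * phih j - theta M m + \<epsilon>)) ` {\<epsilon>. \<bar>\<epsilon>\<bar> \<le> 2 * phit j})"

definition gvec :: "(nat \<Rightarrow> real) \<Rightarrow> (nat \<Rightarrow> real) \<Rightarrow> nat \<Rightarrow> nat \<Rightarrow> nat \<Rightarrow> real" where
  "gvec phih phit M m j = hvec phih phit M m j / cos (pi / real M)"

definition Sfun :: "nat \<Rightarrow> (nat \<Rightarrow> real) \<Rightarrow> (nat \<Rightarrow> real) \<Rightarrow> (nat \<Rightarrow> real) \<Rightarrow> real" where
  "Sfun n phih phit y =
     Sup ((\<lambda>\<phi>. norm (\<Sum>j<n. y j *\<^sub>R uvec (2 * \<phi> j)))
          ` (\<Pi>\<^sub>E j\<in>{..<n}. {phih j - phit j .. phih j + phit j}))"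

end

theory Submission
  imports Defs
begin

lemma norm_v2: "norm (x::real^2) = sqrt ((x$1)^2 + (x$2)^2)"
  by (simp add: norm_vec_def L2_set_def UNIV_2)

lemma uvec_1[simp]: "uvec t $ 1 = cos t" and uvec_2[simp]: "uvec t $ 2 = sin t"
  by (simp_all add: uvec_def)

lemma key:
  fixes a b :: real and M :: nat
  assumes "M \<ge> 3"
  shows "\<exists>m<M. sqrt (a^2+b^2) * cos (pi / real M) \<le> a * cos (theta M m) + b * sin (theta M m)"
proof (cases "sqrt (a^2+b^2) = 0")
  case True
  then have "a = 0" "b = 0" by (auto simp: power2_eq_square)
  then show ?thesis using assms True by (intro exI[of _ 0]) auto
next
  case False
  define r where "r = sqrt (a^2+b^2)"
  have rpos: "r > 0" using False unfolding r_def by (simp add: add_nonneg_nonneg order_le_neq_trans)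
  have r2: "r^2 = a^2+b^2" unfolding r_def by simp
  have "(a/r)^2 + (b/r)^2 = 1" proof -
    have "r^2 > 0" using rpos by simp
    then have "(a/r)^2 + (b/r)^2 = (a^2+b^2) / r^2" by (simp add: power_divide add_divide_distrib)
    then show ?thesis using r2 \<open>r^2 > 0\<close> by (metis divide_self less_irrefl)
  qed
  then obtain t where t: "0 \<le> t" "t < 2*pi" "a/r = cos t" "b/r = sin t" by (rule sincos_total_2pi)
  have ab: "a = r * cos t" "b = r * sin t" using t(3,4) rpos by (auto simp: field_simps)
  define s where "s = t * M / (2*pi)"
  have s0: "0 \<le> s" "s < M" using t assms unfolding s_def by (auto simp: field_simps)
  define m where "m = nat (floor s)"
  have m: "real m \<le> s" "s < real m + 1" using s0 unfolding m_def by linarith+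
  have mM: "m < M" using m s0 by linarith
  have Mpos: "real M > 0" using assms by simp
  have eq: "theta M m - t = (2 * real m + 1 - 2 * s) * (pi / real M)"
    unfolding theta_def s_def using Mpos by (simp add: field_simps)
  have X: "\<bar>2 * real m + 1 - 2 * s\<bar> \<le> 1" using m by linarith
  have "\<bar>theta M m - t\<bar> = \<bar>2 * real m + 1 - 2 * s\<bar> * (pi / real M)"
    unfolding eq abs_mult using Mpos by simp
  also have "\<dots> \<le> 1 * (pi / real M)" using X Mpos by (intro mult_right_mono) auto
  finally have d: "\<bar>t - theta M m\<bar> \<le> pi / real M" by (simp add: abs_minus_commute)
  have piM: "pi / real M \<le> pi" using Mpos assms by (simp add: divide_le_eq)
  have "cos (pi / real M) \<le> cos \<bar>t - theta M m\<bar>"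
    using d piM by (subst cos_mono_le_eq) auto
  then have c: "cos (pi / real M) \<le> cos (t - theta M m)" by simp
  have "a * cos (theta M m) + b * sin (theta M m) = r * cos (t - theta M m)"
    by (simp add: ab cos_diff algebra_simps)
  then show ?thesis using c rpos mM unfolding r_def[symmetric]
    by (intro exI[of _ m]) (auto intro: mult_left_mono)
qed

lemma normsum:
  "norm (\<Sum>j<n. y j *\<^sub>R uvec (2 * \<phi> j)) =
   sqrt ((\<Sum>j<n. y j * cos (2 * \<phi> j))^2 + (\<Sum>j<n. y j * sin (2 * \<phi> j))^2)"
  by (simp add: norm_v2 sum_component)

lemma lincomb:
  fixes y \<phi> :: "nat \<Rightarrow> real"
  shows "(\<Sum>j<n. y j * cos (2 * \<phi> j)) * cos t + (\<Sum>j<n. y j * sin (2 * \<phi> j)) * sin t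
   = (\<Sum>j<n. y j * cos (2 * \<phi> j - t))"
proof -
  have "(\<Sum>j<n. y j * cos (2 * \<phi> j - t)) = (\<Sum>j<n. y j * cos (2 * \<phi> j) * cos t + y j * sin (2 * \<phi> j) * sin t)"
    by (simp add: cos_diff algebra_simps)
  then show ?thesis by (simp add: sum.distrib sum_distrib_right)
qed

lemma CS: "(a::real) * cos t + b * sin t \<le> sqrt (a^2 + b^2)"
proof (rule real_le_rsqrt)
  have e: "(a * cos t + b * sin t)^2 + (a * sin t - b * cos t)^2 = a^2 + b^2"
    using sin_cos_squared_add[of t] by algebra
  have "0 \<le> (a * sin t - b * cos t)^2" by simp
  then show "(a * cos t + b * sin t)^2 \<le> a^2 + b^2"
    using e by linarith
qed

lemma uvec_norm: "norm (uvec t) = 1"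
  by (simp add: norm_v2)

lemma hv_ge:
  assumes "\<bar>e\<bar> \<le> 2 * phit j"
  shows "cos (2 * phih j - theta M m + e) \<le> hvec phih phit M m j"
  unfolding hvec_def
  by (rule cSup_upper) (use assms in \<open>auto intro!: bdd_aboveI[of _ 1]\<close>)

lemma hv_att:
  assumes "phit j \<ge> 0"
  shows "\<exists>e. \<bar>e\<bar> \<le> 2 * phit j \<and> hvec phih phit M m j = cos (2 * phih j - theta M m + e)"
proof -
  have S: "{\<epsilon>::real. \<bar>\<epsilon>\<bar> \<le> 2 * phit j} = {-2 * phit j .. 2 * phit j}" by auto
  have "\<exists>x\<in>{-2 * phit j .. 2 * phit j}. \<forall>z\<in>{-2 * phit j .. 2 * phit j}. cos (2 * phih j - theta M m + z) \<le> cos (2 * phih j - theta M m + x)"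
    by (rule continuous_attains_sup) (use assms in \<open>auto intro!: continuous_intros\<close>)
  then obtain x where x: "x \<in> {-2 * phit j .. 2 * phit j}"
    "\<forall>z\<in>{-2 * phit j .. 2 * phit j}. cos (2 * phih j - theta M m + z) \<le> cos (2 * phih j - theta M m + x)"
    by blast
  have "hvec phih phit M m j = cos (2 * phih j - theta M m + x)"
    unfolding hvec_def S by (rule cSup_eq_maximum) (use x in auto)
  then show ?thesis by (intro exI[of _ x]) (use x(1) in auto)
qed

theorem lemma2:
  fixes n M :: nat and phih phit y :: "nat \<Rightarrow> real"
  assumes "n \<ge> 1"
    and "\<forall>j<n. phit j \<ge> 0"
    and "M \<ge> 3"
    and "\<forall>j<n. y j \<ge> 0"
  shows "0 \<le> Max ((\<lambda>m. \<Sum>j<n. hvec phih phit M m j * y j) ` {..<M})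
       \<and> Max ((\<lambda>m. \<Sum>j<n. hvec phih phit M m j * y j) ` {..<M}) \<le> Sfun n phih phit y
       \<and> Sfun n phih phit y \<le> Max ((\<lambda>m. \<Sum>j<n. gvec phih phit M m j * y j) ` {..<M})"
proof -
  define H where "H m = (\<Sum>j<n. hvec phih phit M m j * y j)" for m
  define G where "G m = (\<Sum>j<n. gvec phih phit M m j * y j)" for m
  define B where "B = (\<Pi>\<^sub>E j\<in>{..<n}. {phih j - phit j .. phih j + phit j})"
  define f where "f \<phi> = norm (\<Sum>j<n. y j *\<^sub>R uvec (2 * \<phi> j))" for \<phi> :: "nat \<Rightarrow> real"
  have Sdef: "Sfun n phih phit y = Sup (f ` B)" unfolding Sfun_def f_def B_def ..
  have Mpos: "real M > 0" using assms by simp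
  have c1: "0 < pi / real M" using Mpos by simp
  have c2: "pi / real M < pi / 2" by (rule frac_less2) (use assms(3) in auto)
  have cpos: "cos (pi / real M) > 0"
    using c1 c2 by (intro cos_gt_zero_pi) linarith+
  have fin: "finite {..<M}" "{..<M} \<noteq> {}" using assms(3) by (auto simp: lessThan_empty_iff)
  have HMax: "H m \<le> Max (H ` {..<M})" if "m < M" for m using fin that by auto
  have GMax: "G m \<le> Max (G ` {..<M})" if "m < M" for m using fin that by auto
  have bnd: "(\<Sum>j<n. y j * cos (2 * \<phi> j - theta M m)) \<le> H m" if "\<phi> \<in> B" for \<phi> m
    unfolding H_def
  proof (rule sum_mono)
    fix j assume j: "j \<in> {..<n}"
    then have "\<phi> j \<in> {phih j - phit j .. phih j + phit j}" using that unfolding B_def by auto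
    then have "\<bar>2 * \<phi> j - 2 * phih j\<bar> \<le> 2 * phit j" by auto
    from hv_ge[where e="2 * \<phi> j - 2 * phih j" and phit=phit and j=j and phih=phih and M=M and m=m, OF this]
    have "cos (2 * \<phi> j - theta M m) \<le> hvec phih phit M m j" by (simp add: algebra_simps)
    then show "y j * cos (2 * \<phi> j - theta M m) \<le> hvec phih phit M m j * y j"
      using assms(4) j by (simp add: mult.commute mult_left_mono)
  qed
  have phihB: "restrict phih {..<n} \<in> B" using assms(2) unfolding B_def by auto
  have Bne: "B \<noteq> {}" using phihB by auto
  have fbnd: "f \<phi> \<le> (\<Sum>j<n. \<bar>y j\<bar>)" for \<phi>
    unfolding f_def by (rule order.trans[OF norm_sum]) (simp add: uvec_norm)
  have bdd: "bdd_above (f ` B)" using fbnd by (auto intro!: bdd_aboveI2)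
  have f_eq: "f \<phi> = sqrt ((\<Sum>j<n. y j * cos (2 * \<phi> j))^2 + (\<Sum>j<n. y j * sin (2 * \<phi> j))^2)" for \<phi>
    unfolding f_def by (rule normsum)
  have keyf: "\<exists>m<M. f \<phi> * cos (pi / real M) \<le> (\<Sum>j<n. y j * cos (2 * \<phi> j - theta M m))" for \<phi>
    using key[OF assms(3), of "\<Sum>j<n. y j * cos (2 * \<phi> j)" "\<Sum>j<n. y j * sin (2 * \<phi> j)"]
    unfolding f_eq lincomb by blast
  have P1: "0 \<le> Max (H ` {..<M})"
  proof -
    obtain m where m: "m < M" "f (restrict phih {..<n}) * cos (pi / real M)
        \<le> (\<Sum>j<n. y j * cos (2 * restrict phih {..<n} j - theta M m))"
      using keyf by blast
    have "0 \<le> f (restrict phih {..<n}) * cos (pi / real M)" using cpos unfolding f_def by simp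
    also have "\<dots> \<le> H m" using m(2) bnd[OF phihB] by (rule order.trans)
    also have "\<dots> \<le> Max (H ` {..<M})" using HMax m by simp
    finally show ?thesis .
  qed
  have P2: "Max (H ` {..<M}) \<le> Sup (f ` B)"
  proof (subst Max_le_iff)
    show "finite (H ` {..<M})" "H ` {..<M} \<noteq> {}" using fin by auto
    show "\<forall>a\<in>H ` {..<M}. a \<le> Sup (f ` B)"
    proof
      fix a assume "a \<in> H ` {..<M}"
      then obtain m where a: "a = H m" by auto
      define e where "e j = (SOME e. \<bar>e\<bar> \<le> 2 * phit j \<and> hvec phih phit M m j = cos (2 * phih j - theta M m + e))" for j
      have e: "\<bar>e j\<bar> \<le> 2 * phit j \<and> hvec phih phit M m j = cos (2 * phih j - theta M m + e j)" if "j < n" for j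
        unfolding e_def by (rule someI_ex) (rule hv_att, use assms(2) that in auto)
      define \<phi> where "\<phi> = restrict (\<lambda>j. phih j + e j / 2) {..<n}"
      have phiB: "\<phi> \<in> B" unfolding B_def \<phi>_def using e by (force simp: abs_le_iff)
      have "H m = (\<Sum>j<n. y j * cos (2 * \<phi> j - theta M m))"
        unfolding H_def
      proof (rule sum.cong)
        fix j assume "j \<in> {..<n}"
        then show "hvec phih phit M m j * y j = y j * cos (2 * \<phi> j - theta M m)"
          using e[of j] unfolding \<phi>_def by (auto simp: algebra_simps)
      qed simp
      also have "\<dots> \<le> f \<phi>" unfolding f_eq lincomb[symmetric] by (rule CS)
      also have "\<dots> \<le> Sup (f ` B)" using bdd phiB by (auto intro: cSup_upper)
      finally show "a \<le> Sup (f ` B)" using a by simp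
    qed
  qed
  have P3: "Sup (f ` B) \<le> Max (G ` {..<M})"
  proof (rule cSup_least)
    show "f ` B \<noteq> {}" using Bne by simp
    fix x assume "x \<in> f ` B"
    then obtain \<phi> where phi: "\<phi> \<in> B" "x = f \<phi>" by auto
    obtain m where m: "m < M" "f \<phi> * cos (pi / real M) \<le> (\<Sum>j<n. y j * cos (2 * \<phi> j - theta M m))"
      using keyf by blast
    have "f \<phi> * cos (pi / real M) \<le> H m" using m(2) bnd[OF phi(1)] by (rule order.trans)
    then have "f \<phi> \<le> H m / cos (pi / real M)" using cpos by (simp add: field_simps)
    also have "\<dots> = G m" unfolding H_def G_def gvec_def by (simp add: sum_divide_distrib)
    also have "\<dots> \<le> Max (G ` {..<M})" using GMax m by simp
    finally show "x \<le> Max (G ` {..<M})" using phi by simp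
  qed
  show ?thesis using P1 P2 P3 unfolding Sdef H_def[symmetric] G_def[symmetric]
    by (simp add: H_def[abs_def] G_def[abs_def])
qed

end
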